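(* Let $n\ge1$ and let $S=(s_I)_{I\subseteq[n]}\in(\mathbb{R}_{>0})^{2^n}$ with $s_\emptyset=1$ be a molecule given in $s$-coordinates. Identify $S$ with the tensor in $(\mathbb{R}^2)^{\otimes n}$ whose entry at $\varepsilon\in\{0,1\}^n$ is $s_{\{i:\varepsilon_i=1\}}$, and suppose this tensor has positive rank $k$. Then there exist weights $\lambda_1,\dots,\lambda_k>0$ with $\sum_j\lambda_j=1$ and molecules $S^{(1)},\dots,S^{(k)}$ with $n$ independent sites such that $S=\sum_{j=1}^k\lambda_j S^{(j)}$ (entrywise); in particular the binding polynomial of $S$ equals $\sum_{j=1}^k\lambda_j$ times the binding polynomial of $S^{(j)}$, i.e. the corresponding mixture of the $k$ molecules has the same binding curve as $S$. Moreover, $S$ cannot be written in this way using only $k-1$ molecules with $n$ independent sites.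
   Context: A molecule with $n$ sites is $W=(w_I)_{I\subseteq[n]}\in(\mathbb{R}_{>0})^{2^n}$ with $w_\emptyset=1$; its $s$-coordinates are $s_I=\prod_{I'\subseteq I}w_{I'}$ (a bijection of $(\mathbb{R}_{>0})^{2^n}$ onto itself, with $s_\emptyset=1$). The binding polynomial is $\sum_{k=0}^n a_k\Lambda^k$ with $a_k=\sum_{|I|=k}s_I$. A molecule has $n$ independent sites if $w_I=1$ for all $|I|>1$, equivalently $s_I=\prod_{i\in I}s_i$ for all $I$. A (positive) rank-one tensor is $v_1\otimes\dots\otimes v_n$ with $v_i=(s_i,t_i)\in(\mathbb{R}_{>0})^2$, whose entry at $\varepsilon\in\{0,1\}^n$ is $\prod_{i:\varepsilon_i=1}s_i\prod_{i:\varepsilon_i=0}t_i$; the positive rank of a tensor is the least number of such positive rank-one tensors summing to it. *)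

theory Defs
  imports Main "HOL-Computational_Algebra.Polynomial"
begin

text \<open>A molecule in s-coordinates is a function
  s :: nat set => real on the subsets of [n]; the tensor identified with it has entry
  s {i. eps_i = 1} at eps, so tensor entries are indexed by subsets I of [n].\<close>

definition sites :: "nat \<Rightarrow> nat set" where
  "sites n = {1..n}"

definition molecule_s :: "nat \<Rightarrow> (nat set \<Rightarrow> real) \<Rightarrow> bool" where
  "molecule_s n s \<longleftrightarrow> s {} = 1 \<and> (\<forall>I. I \<subseteq> sites n \<longrightarrow> s I > 0)"

definition indep_sites :: "nat \<Rightarrow> (nat set \<Rightarrow> real) \<Rightarrow> bool" where
  "indep_sites n s \<longleftrightarrow> molecule_s n s \<and>
     (\<forall>I. I \<subseteq> sites n \<longrightarrow> s I = (\<Prod>i\<in>I. s {i}))"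

text \<open>Entry at I (i.e. at eps with eps_i = 1 iff i in I) of the positive rank-one tensor
  v_1 x ... x v_n with v_i = (a i, b i).\<close>
definition rank_one :: "nat \<Rightarrow> (nat \<Rightarrow> real) \<Rightarrow> (nat \<Rightarrow> real) \<Rightarrow> nat set \<Rightarrow> real" where
  "rank_one n a b I = (\<Prod>i\<in>I. a i) * (\<Prod>i\<in>sites n - I. b i)"

definition pos_decomp :: "nat \<Rightarrow> (nat set \<Rightarrow> real) \<Rightarrow> nat \<Rightarrow> bool" where
  "pos_decomp n T k \<longleftrightarrow> (\<exists>a b :: nat \<Rightarrow> nat \<Rightarrow> real.
     (\<forall>j<k. \<forall>i\<in>sites n. a j i > 0 \<and> b j i > 0) \<and>
     (\<forall>I. I \<subseteq> sites n \<longrightarrow> T I = (\<Sum>j<k. rank_one n (a j) (b j) I)))"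

definition has_pos_rank :: "nat \<Rightarrow> (nat set \<Rightarrow> real) \<Rightarrow> nat \<Rightarrow> bool" where
  "has_pos_rank n T k \<longleftrightarrow> pos_decomp n T k \<and> (\<forall>k'<k. \<not> pos_decomp n T k')"

definition binding_coeff :: "nat \<Rightarrow> (nat set \<Rightarrow> real) \<Rightarrow> nat \<Rightarrow> real" where
  "binding_coeff n s m = (\<Sum>I\<in>{I. I \<subseteq> sites n \<and> card I = m}. s I)"

definition binding_poly :: "nat \<Rightarrow> (nat set \<Rightarrow> real) \<Rightarrow> real poly" where
  "binding_poly n s = (\<Sum>m\<le>n. monom (binding_coeff n s m) m)"

definition indep_mixture ::
  "nat \<Rightarrow> (nat set \<Rightarrow> real) \<Rightarrow> nat \<Rightarrow> (nat \<Rightarrow> real) \<Rightarrow> (nat \<Rightarrow> nat set \<Rightarrow> real) \<Rightarrow> bool" where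
  "indep_mixture n s k lam S \<longleftrightarrow>
     (\<forall>j<k. lam j > 0) \<and> (\<Sum>j<k. lam j) = 1 \<and> (\<forall>j<k. indep_sites n (S j)) \<and>
     (\<forall>I. I \<subseteq> sites n \<longrightarrow> s I = (\<Sum>j<k. lam j * S j I))"

end

theory Submission
  imports Defs
begin

lemma fin_sites[simp]: "finite (sites n)" by (simp add: sites_def)

lemma split_prod:
  assumes "I \<subseteq> sites n"
  shows "prod (f::nat\<Rightarrow>real) (sites n) = prod f I * prod f (sites n - I)"
  using prod.subset_diff[OF assms fin_sites, of f] by (simp add: mult.commute)

lemma exist_part:
  assumes "molecule_s n s" and "pos_decomp n s k"
  shows "\<exists>lam S. indep_mixture n s k lam S"
proof -
  from assms(2) obtain a b where pos: "\<forall>j<k. \<forall>i\<in>sites n. a j i > 0 \<and> b j i > 0"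
    and dec: "\<forall>I. I \<subseteq> sites n \<longrightarrow> s I = (\<Sum>j<k. rank_one n (a j) (b j) I)"
    unfolding pos_decomp_def by blast
  define lam where "lam j = (\<Prod>i\<in>sites n. b j i)" for j
  define S where "S j I = (\<Prod>i\<in>I. a j i / b j i)" for j I
  have lampos: "\<forall>j<k. lam j > 0" using pos unfolding lam_def
    by (auto intro!: prod_pos)
  have key: "lam j * S j I = rank_one n (a j) (b j) I" if "j < k" "I \<subseteq> sites n" for j I
  proof -
    have bnz: "\<forall>i\<in>I. b j i \<noteq> 0"
    proof
      fix i assume "i \<in> I"
      then have "i \<in> sites n" using that(2) by blast
      then show "b j i \<noteq> 0" using pos that(1) by (metis less_irrefl)
    qed
    have "lam j * S j I = (\<Prod>i\<in>I. b j i) * (\<Prod>i\<in>sites n - I. b j i) * (\<Prod>i\<in>I. a j i / b j i)"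
      unfolding lam_def S_def using split_prod[OF that(2)] by simp
    also have "(\<Prod>i\<in>I. b j i) * (\<Prod>i\<in>I. a j i / b j i) = (\<Prod>i\<in>I. a j i)"
      unfolding prod.distrib[symmetric] using bnz by (intro prod.cong) auto
    ultimately show ?thesis unfolding rank_one_def by (simp add: algebra_simps)
  qed
  have sum1: "(\<Sum>j<k. lam j) = 1"
  proof -
    have "(\<Sum>j<k. lam j) = (\<Sum>j<k. lam j * S j {})" by (simp add: S_def)
    also have "\<dots> = s {}" using dec key by simp
    finally show ?thesis using assms(1) unfolding molecule_s_def by simp
  qed
  have ind: "\<forall>j<k. indep_sites n (S j)"
  proof (intro allI impI)
    fix j assume j: "j < k"
    have "S j I > 0" if "I \<subseteq> sites n" for I
      unfolding S_def using pos j that by (auto intro!: prod_pos)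
    then show "indep_sites n (S j)"
      unfolding indep_sites_def molecule_s_def by (simp add: S_def)
  qed
  have "\<forall>I. I \<subseteq> sites n \<longrightarrow> s I = (\<Sum>j<k. lam j * S j I)"
    using dec key by simp
  then show ?thesis using lampos sum1 ind unfolding indep_mixture_def by blast
qed

lemma smult_sum_r: "smult (c::real) (\<Sum>m\<in>A. f m) = (\<Sum>m\<in>A. smult c (f m))"
  by (induction A rule: infinite_finite_induct) (auto simp: smult_add_right)

lemma poly_part:
  assumes "indep_mixture n s k lam S"
  shows "binding_poly n s = (\<Sum>j<k. smult (lam j) (binding_poly n (S j)))"
proof -
  have c: "binding_coeff n s m = (\<Sum>j<k. lam j * binding_coeff n (S j) m)" for m
  proof -
    have "binding_coeff n s m = (\<Sum>I\<in>{I. I \<subseteq> sites n \<and> card I = m}. \<Sum>j<k. lam j * S j I)"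
      unfolding binding_coeff_def using assms unfolding indep_mixture_def
      by (intro sum.cong) auto
    also have "\<dots> = (\<Sum>j<k. lam j * binding_coeff n (S j) m)"
      unfolding binding_coeff_def sum_distrib_left by (rule sum.swap)
    finally show ?thesis .
  qed
  have "binding_poly n s = (\<Sum>m\<le>n. \<Sum>j<k. monom (lam j * binding_coeff n (S j) m) m)"
    unfolding binding_poly_def c by (simp add: monom_sum)
  also have "\<dots> = (\<Sum>j<k. \<Sum>m\<le>n. monom (lam j * binding_coeff n (S j) m) m)"
    by (rule sum.swap)
  also have "\<dots> = (\<Sum>j<k. smult (lam j) (binding_poly n (S j)))"
    unfolding binding_poly_def by (simp add: smult_sum_r smult_monom)
  finally show ?thesis .
qed

lemma mix_decomp:
  assumes "n \<ge> 1" and "indep_mixture n s k lam S"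
  shows "pos_decomp n s k"
proof -
  have one: "1 \<in> sites n" using assms(1) by (simp add: sites_def)
  define c where "c j i = (if i = (1::nat) then lam j else 1)" for j i
  define a where "a j i = c j i * S j {i}" for j i
  have lampos: "\<forall>j<k. lam j > 0" and ind: "\<forall>j<k. indep_sites n (S j)"
    and mix: "\<forall>I. I \<subseteq> sites n \<longrightarrow> s I = (\<Sum>j<k. lam j * S j I)"
    using assms(2) unfolding indep_mixture_def by auto
  have cprod: "(\<Prod>i\<in>sites n. c j i) = lam j" for j
  proof -
    have "(\<Prod>i\<in>sites n. c j i) = c j 1 * (\<Prod>i\<in>sites n - {1}. c j i)"
      using prod.remove[OF fin_sites one] by simp
    also have "(\<Prod>i\<in>sites n - {1}. c j i) = 1" by (intro prod.neutral) (simp add: c_def)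
    finally show ?thesis by (simp add: c_def)
  qed
  have pos: "\<forall>j<k. \<forall>i\<in>sites n. a j i > 0 \<and> c j i > 0"
  proof (intro allI impI ballI)
    fix j i assume j: "j < k" and i: "i \<in> sites n"
    have "molecule_s n (S j)" using ind j unfolding indep_sites_def by blast
    moreover have "{i} \<subseteq> sites n" using i by blast
    ultimately have "S j {i} > 0" unfolding molecule_s_def by blast
    then show "a j i > 0 \<and> c j i > 0" using lampos j by (simp add: a_def c_def)
  qed
  have key: "lam j * S j I = rank_one n (a j) (c j) I" if "j < k" "I \<subseteq> sites n" for j I
  proof -
    have "S j I = (\<Prod>i\<in>I. S j {i})" using ind that unfolding indep_sites_def by auto
    then have "rank_one n (a j) (c j) I = (\<Prod>i\<in>I. c j i) * (\<Prod>i\<in>sites n - I. c j i) * S j I"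
      unfolding rank_one_def a_def prod.distrib by (simp add: algebra_simps)
    also have "\<dots> = lam j * S j I" using split_prod[OF that(2), of "c j"] cprod by simp
    finally show ?thesis by simp
  qed
  show ?thesis unfolding pos_decomp_def
    by (rule exI[of _ a], rule exI[of _ c]) (use pos mix key in simp)
qed

theorem mainTheorem2:
  fixes n k :: nat and s :: "nat set \<Rightarrow> real"
  assumes "n \<ge> 1"
    and "molecule_s n s"
    and "has_pos_rank n s k"
  shows "(\<exists>lam S. indep_mixture n s k lam S \<and>
            binding_poly n s = (\<Sum>j<k. smult (lam j) (binding_poly n (S j))))
         \<and> \<not> (\<exists>lam S. indep_mixture n s (k - 1) lam S)"
proof
  have pd: "pos_decomp n s k" and minr: "\<forall>k'<k. \<not> pos_decomp n s k'"
    using assms(3) unfolding has_pos_rank_def by auto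
  show "\<exists>lam S. indep_mixture n s k lam S \<and>
            binding_poly n s = (\<Sum>j<k. smult (lam j) (binding_poly n (S j)))"
    using exist_part[OF assms(2) pd] poly_part by blast
  have "k \<noteq> 0"
  proof
    assume "k = 0"
    then have "s {} = 0" using pd unfolding pos_decomp_def by auto
    then show False using assms(2) unfolding molecule_s_def by simp
  qed
  then show "\<not> (\<exists>lam S. indep_mixture n s (k - 1) lam S)"
    using mix_decomp[OF assms(1)] minr by (metis diff_less zero_less_one not_gr_zero)
qed

end
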